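(* Let $q$ be a non-negative integer and $\Lambda$ a unital commutative ring which is $q$-torsion-free. Let $\mathfrak f$ be a free Lie algebra over $\Lambda$ and $\xi^{\wedge}\colon\mathfrak f\wedge^q\mathfrak f\to\mathfrak f$ the homomorphism with $\xi^{\wedge}(x\wedge y)=[x,y]$ and $\xi^{\wedge}(\{x\})=qx$. Then $\xi^{\wedge}$ induces an isomorphism $\mathfrak f\curlywedge^q\mathfrak f\cong[\mathfrak f,\mathfrak f]$.
   Context: All Lie algebras are over $\Lambda$. For $q\ge1$, the non-abelian $q$-exterior square $\mathfrak g\wedge^q\mathfrak g$ is the Lie algebra generated by symbols $h\wedge g$ and $\{h\}$ ($h,g\in\mathfrak g$) subject to, for all $h,h',g,g'\in\mathfrak g$, $\lambda,\lambda'\in\Lambda$: (1) $\lambda(h\wedge g)=\lambda h\wedge g=h\wedge\lambda g$; (2),(3) additivity in each variable; (4) $[h,h']\wedge g=h\wedge[h',g]-h'\wedge[h,g]$; (5) $h\wedge[g,g']=[g',h]\wedge g-[g,h]\wedge g'$; (6) $[h\wedge g,h'\wedge g']=[h,g]\wedge[h',g']$; (7) $[\{h'\},h\wedge g]=[qh',h]\wedge g+h\wedge[qh',g]$; (8) $\{\lambda h+\lambda'h'\}=\lambda\{h\}+\lambda'\{h'\}$; (9) $[\{h\},\{h'\}]=qh\wedge qh'$; (10) $\{[h,g]\}=q(h\wedge g)$; (11) $h\wedge h=0$. For $q=0$, generated by the $h\wedge g$ subject to (1)–(6) and (11) (Ellis's exterior square $\mathfrak g\wedge\mathfrak g$, also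 defined this way for every $q$). $\mathfrak g\curlywedge^q\mathfrak g$ denotes the image of the natural homomorphism $\mathfrak g\wedge\mathfrak g\to\mathfrak g\wedge^q\mathfrak g$, $h\wedge g\mapsto h\wedge g$. *)

theory Defs
  imports Main
begin

datatype ('g, 'r) lterm =
    LGen 'g
  | LZero
  | LAdd "('g, 'r) lterm" "('g, 'r) lterm"
  | LNeg "('g, 'r) lterm"
  | LSmul 'r "('g, 'r) lterm"
  | LBr "('g, 'r) lterm" "('g, 'r) lterm"

text \<open>The quotient by
  lie_cong R is the Lie algebra over 'r presented by generators 'g and relations R.\<close>
inductive lie_cong :: "(('g, 'r) lterm \<times> ('g, 'r) lterm) set \<Rightarrow>
    ('g, 'r::comm_ring_1) lterm \<Rightarrow> ('g, 'r) lterm \<Rightarrow> bool"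
  for R where
  rel: "(a, b) \<in> R \<Longrightarrow> lie_cong R a b"
| refl: "lie_cong R a a"
| sym: "lie_cong R a b \<Longrightarrow> lie_cong R b a"
| trans: "lie_cong R a b \<Longrightarrow> lie_cong R b c \<Longrightarrow> lie_cong R a c"
| cong_add: "lie_cong R a a' \<Longrightarrow> lie_cong R b b' \<Longrightarrow> lie_cong R (LAdd a b) (LAdd a' b')"
| cong_neg: "lie_cong R a a' \<Longrightarrow> lie_cong R (LNeg a) (LNeg a')"
| cong_smul: "lie_cong R a a' \<Longrightarrow> lie_cong R (LSmul l a) (LSmul l a')"
| cong_br: "lie_cong R a a' \<Longrightarrow> lie_cong R b b' \<Longrightarrow> lie_cong R (LBr a b) (LBr a' b')"
| add_assoc: "lie_cong R (LAdd (LAdd a b) c) (LAdd a (LAdd b c))"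
| add_comm: "lie_cong R (LAdd a b) (LAdd b a)"
| add_zero: "lie_cong R (LAdd a LZero) a"
| add_neg: "lie_cong R (LAdd a (LNeg a)) LZero"
| smul_add: "lie_cong R (LSmul l (LAdd a b)) (LAdd (LSmul l a) (LSmul l b))"
| add_smul: "lie_cong R (LSmul (l + m) a) (LAdd (LSmul l a) (LSmul m a))"
| smul_smul: "lie_cong R (LSmul (l * m) a) (LSmul l (LSmul m a))"
| one_smul: "lie_cong R (LSmul 1 a) a"
| br_add_left: "lie_cong R (LBr (LAdd a b) c) (LAdd (LBr a c) (LBr b c))"
| br_add_right: "lie_cong R (LBr a (LAdd b c)) (LAdd (LBr a b) (LBr a c))"
| br_smul_left: "lie_cong R (LBr (LSmul l a) b) (LSmul l (LBr a b))"
| br_smul_right: "lie_cong R (LBr a (LSmul l b)) (LSmul l (LBr a b))"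
| br_alt: "lie_cong R (LBr a a) LZero"
| jacobi: "lie_cong R (LAdd (LBr a (LBr b c)) (LAdd (LBr b (LBr c a)) (LBr c (LBr a b)))) LZero"

lemma lie_cong_equivp: "equivp (lie_cong R)"
  by (rule equivpI; auto intro: reflpI sympI transpI lie_cong.intros)

quotient_type (overloaded) ('x, 'r) freelie = "('x, 'r::comm_ring_1) lterm" / "lie_cong {}"
  by (rule lie_cong_equivp)

lift_definition fl_zero :: "('x, 'r::comm_ring_1) freelie" is LZero .
lift_definition fl_add :: "('x, 'r::comm_ring_1) freelie \<Rightarrow> ('x, 'r) freelie \<Rightarrow> ('x, 'r) freelie"
  is LAdd by (rule lie_cong.cong_add)
lift_definition fl_neg :: "('x, 'r::comm_ring_1) freelie \<Rightarrow> ('x, 'r) freelie"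
  is LNeg by (rule lie_cong.cong_neg)
lift_definition fl_smul :: "'r::comm_ring_1 \<Rightarrow> ('x, 'r) freelie \<Rightarrow> ('x, 'r) freelie"
  is LSmul by (rule lie_cong.cong_smul)
lift_definition fl_br :: "('x, 'r::comm_ring_1) freelie \<Rightarrow> ('x, 'r) freelie \<Rightarrow> ('x, 'r) freelie"
  is LBr by (rule lie_cong.cong_br)

inductive_set fl_derived :: "('x, 'r::comm_ring_1) freelie set" where
  "fl_zero \<in> fl_derived"
| "fl_br x y \<in> fl_derived"
| "a \<in> fl_derived \<Longrightarrow> b \<in> fl_derived \<Longrightarrow> fl_add a b \<in> fl_derived"
| "a \<in> fl_derived \<Longrightarrow> fl_smul l a \<in> fl_derived"

text \<open>Generators: the symbols h \<and> g and {h}, for h, g in f.\<close>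
declare [[typedef_overloaded]]
datatype ('x, 'r) qgen = Wedge "('x, 'r) freelie" "('x, 'r) freelie" | Curly "('x, 'r) freelie"

abbreviation W :: "('x, 'r::comm_ring_1) freelie \<Rightarrow> ('x, 'r) freelie \<Rightarrow> (('x, 'r) qgen, 'r) lterm"
  where "W h g \<equiv> LGen (Wedge h g)"
abbreviation C :: "('x, 'r::comm_ring_1) freelie \<Rightarrow> (('x, 'r) qgen, 'r) lterm"
  where "C h \<equiv> LGen (Curly h)"

text \<open>Relations (1)-(6) and (11) (Ellis' exterior square).\<close>
definition ext_rels :: "((('x, 'r::comm_ring_1) qgen, 'r) lterm \<times> (('x, 'r) qgen, 'r) lterm) set" where
  "ext_rels =
     {(LSmul l (W h g), W (fl_smul l h) g) | l h g. True}
   \<union> {(LSmul l (W h g), W h (fl_smul l g)) | l h g. True}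
   \<union> {(W (fl_add h h') g, LAdd (W h g) (W h' g)) | h h' g. True}
   \<union> {(W h (fl_add g g'), LAdd (W h g) (W h g')) | h g g'. True}
   \<union> {(W (fl_br h h') g, LAdd (W h (fl_br h' g)) (LNeg (W h' (fl_br h g)))) | h h' g. True}
   \<union> {(W h (fl_br g g'), LAdd (W (fl_br g' h) g) (LNeg (W (fl_br g h) g'))) | h g g'. True}
   \<union> {(LBr (W h g) (W h' g'), W (fl_br h g) (fl_br h' g')) | h g h' g'. True}
   \<union> {(W h h, LZero) | h. True}"

text \<open>Relations (7)-(10) involving the symbols {h}, for q \<ge> 1.\<close>
definition curly_rels :: "nat \<Rightarrow> ((('x, 'r::comm_ring_1) qgen, 'r) lterm \<times> (('x, 'r) qgen, 'r) lterm) set" where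
  "curly_rels q =
     {(LBr (C h') (W h g),
       LAdd (W (fl_br (fl_smul (of_nat q) h') h) g) (W h (fl_br (fl_smul (of_nat q) h') g))) | h' h g. True}
   \<union> {(C (fl_add (fl_smul l h) (fl_smul l' h')), LAdd (LSmul l (C h)) (LSmul l' (C h'))) | l l' h h'. True}
   \<union> {(LBr (C h) (C h'), W (fl_smul (of_nat q) h) (fl_smul (of_nat q) h')) | h h'. True}
   \<union> {(C (fl_br h g), LSmul (of_nat q) (W h g)) | h g. True}"

text \<open>Defining relations of f \<wedge>^q f. For q = 0 the algebra is generated by the h \<and> g
  alone; this is encoded by additionally killing the symbols {h}.\<close>
definition qext_rels :: "nat \<Rightarrow> ((('x, 'r::comm_ring_1) qgen, 'r) lterm \<times> (('x, 'r) qgen, 'r) lterm) set" where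
  "qext_rels q = (if q = 0 then ext_rels \<union> {(C h, LZero) | h. True}
                  else ext_rels \<union> curly_rels q)"

abbreviation qext_eq :: "nat \<Rightarrow> (('x, 'r::comm_ring_1) qgen, 'r) lterm \<Rightarrow> (('x, 'r) qgen, 'r) lterm \<Rightarrow> bool"
  where "qext_eq q \<equiv> lie_cong (qext_rels q)"

text \<open>Expressions involving only the generators h \<and> g: they represent exactly the
  elements of the image of f \<wedge> f \<rightarrow> f \<wedge>^q f.\<close>
primrec lgens :: "('g, 'r) lterm \<Rightarrow> 'g set" where
  "lgens (LGen g) = {g}"
| "lgens LZero = {}"
| "lgens (LAdd a b) = lgens a \<union> lgens b"
| "lgens (LNeg a) = lgens a"
| "lgens (LSmul l a) = lgens a"
| "lgens (LBr a b) = lgens a \<union> lgens b"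

definition wedge_terms :: "(('x, 'r) qgen, 'r) lterm set" where
  "wedge_terms = {t. \<forall>g \<in> lgens t. \<exists>h k. g = Wedge h k}"

primrec xi :: "nat \<Rightarrow> (('x, 'r::comm_ring_1) qgen, 'r) lterm \<Rightarrow> ('x, 'r) freelie" where
  "xi q (LGen g) = (case g of Wedge h k \<Rightarrow> fl_br h k | Curly h \<Rightarrow> fl_smul (of_nat q) h)"
| "xi q LZero = fl_zero"
| "xi q (LAdd a b) = fl_add (xi q a) (xi q b)"
| "xi q (LNeg a) = fl_neg (xi q a)"
| "xi q (LSmul l a) = fl_smul l (xi q a)"
| "xi q (LBr a b) = fl_br (xi q a) (xi q b)"

definition q_torsion_free :: "nat \<Rightarrow> 'r::comm_ring_1 itself \<Rightarrow> bool" where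
  "q_torsion_free q _ \<longleftrightarrow> q = 0 \<or> (\<forall>l::'r. of_nat q * l = 0 \<longrightarrow> l = 0)"

end

theory Submission
  imports Defs
begin

locale liealg =
  fixes smul :: "'r::comm_ring_1 \<Rightarrow> 'a::ab_group_add \<Rightarrow> 'a"
    and br :: "'a \<Rightarrow> 'a \<Rightarrow> 'a"
  assumes smul_add: "smul l (a + b) = smul l a + smul l b"
    and add_smul: "smul (l + m) a = smul l a + smul m a"
    and smul_smul: "smul (l * m) a = smul l (smul m a)"
    and one_smul: "smul 1 a = a"
    and br_add_left: "br (a + b) c = br a c + br b c"
    and br_add_right: "br a (b + c) = br a b + br a c"
    and br_smul_left: "br (smul l a) b = smul l (br a b)"
    and br_smul_right: "br a (smul l b) = smul l (br a b)"
    and br_alt: "br a a = 0"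
    and jacobi: "br a (br b c) + (br b (br c a) + br c (br a b)) = 0"
begin

lemma br_zero_left[simp]: "br 0 a = 0"
  using br_add_left[of 0 0 a] by simp
lemma br_zero_right[simp]: "br a 0 = 0"
  using br_add_right[of a 0 0] by simp
lemma br_neg_left: "br (- a) b = - br a b"
  using br_add_left[of a "-a" b] by (simp add: eq_neg_iff_add_eq_0 add.commute)
lemma br_neg_right: "br a (- b) = - br a b"
  using br_add_right[of a b "-b"] by (simp add: eq_neg_iff_add_eq_0 add.commute)
lemma br_antisym: "br b a = - br a b"
  using br_alt[of "a + b"] br_alt[of a] br_alt[of b]
  by (simp add: br_add_left br_add_right eq_neg_iff_add_eq_0 add.commute)
lemma smul_zero_left[simp]: "smul 0 a = 0"
  using add_smul[of 0 0 a] by simp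
lemma smul_zero_right[simp]: "smul l 0 = 0"
  using smul_add[of l 0 0] by simp
lemma smul_neg1: "smul (-1) a = - a"
  using add_smul[of 1 "-1" a] by (simp add: one_smul eq_neg_iff_add_eq_0 add.commute)
lemma ag1: "(x::'b::ab_group_add) + (- y + - z) = 0 \<Longrightarrow> z = x - y"
  by (simp add: algebra_simps eq_neg_iff_add_eq_0)
lemma ag2: "(x::'b::ab_group_add) + (- y + z) = 0 \<Longrightarrow> x = y - z"
  by (simp add: algebra_simps eq_neg_iff_add_eq_0)
lemma br_br_left: "br (br h h') g = br h (br h' g) - br h' (br h g)"
proof -
  have J: "br h (br h' g) + (br h' (br g h) + br g (br h h')) = 0" by (rule jacobi)
  have A: "br g (br h h') = - br (br h h') g" by (rule br_antisym)
  have B: "br h' (br g h) = - br h' (br h g)" by (metis br_antisym br_neg_right)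
  from J have "br h (br h' g) + (- br h' (br h g) + - br (br h h') g) = 0" by (simp only: A B)
  then show ?thesis by (rule ag1)
qed
lemma br_br_right: "br h (br g g') = br (br g' h) g - br (br g h) g'"
proof -
  have J: "br h (br g g') + (br g (br g' h) + br g' (br h g)) = 0" by (rule jacobi)
  have A: "br g (br g' h) = - br (br g' h) g" by (rule br_antisym)
  have B: "br g' (br h g) = br (br g h) g'"
    by (metis br_antisym br_neg_right minus_minus)
  from J have "br h (br g g') + (- br (br g' h) g + br (br g h) g') = 0" by (simp only: A B)
  then show ?thesis by (rule ag2)
qed
lemma br_derivation: "br a (br h g) = br (br a h) g + br h (br a g)"
proof -
  have A: "br (br g a) h = br h (br a g)"
    by (metis br_antisym br_neg_right minus_minus)
  have B: "br (br h a) g = - br (br a h) g"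
    by (metis br_antisym br_neg_left)
  show ?thesis using br_br_right[of a h g] unfolding A B by (simp add: algebra_simps)
qed
lemma smul_comm: "smul l (smul m a) = smul m (smul l a)"
  by (metis smul_smul mult.commute)

end

instantiation freelie :: (type, comm_ring_1) ab_group_add
begin
definition "plus_freelie = fl_add"
definition "zero_freelie = fl_zero"
definition "uminus_freelie = fl_neg"
definition "minus_freelie a b = fl_add a (fl_neg (b::('a,'b) freelie))"
instance
proof
  fix a b c :: "('a,'b) freelie"
  show "a + b + c = a + (b + c)" unfolding plus_freelie_def
    by transfer (rule lie_cong.add_assoc)
  show "a + b = b + a" unfolding plus_freelie_def
    by transfer (rule lie_cong.add_comm)
  show "0 + a = a" unfolding plus_freelie_def zero_freelie_def
    by transfer (meson lie_cong.add_comm lie_cong.add_zero lie_cong.trans)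
  show "- a + a = 0" unfolding plus_freelie_def zero_freelie_def uminus_freelie_def
    by transfer (meson lie_cong.add_comm lie_cong.add_neg lie_cong.trans)
  show "a - b = a + - b" unfolding plus_freelie_def minus_freelie_def uminus_freelie_def ..
qed
end

lemma fl_simps[simp]: "fl_add a b = a + b" "fl_zero = 0" "fl_neg a = - a"
  by (simp_all add: plus_freelie_def zero_freelie_def uminus_freelie_def)

interpretation fl: liealg fl_smul fl_br
proof
  fix a b c l m
  show "fl_smul l (a + b) = fl_smul l a + fl_smul l b" unfolding fl_simps[symmetric]
    by transfer (rule lie_cong.smul_add)
  show "fl_smul (l + m) a = fl_smul l a + fl_smul m a" unfolding fl_simps[symmetric]
    by transfer (rule lie_cong.add_smul)
  show "fl_smul (l * m) a = fl_smul l (fl_smul m a)"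
    by transfer (rule lie_cong.smul_smul)
  show "fl_smul 1 a = a"
    by transfer (rule lie_cong.one_smul)
  show "fl_br (a + b) c = fl_br a c + fl_br b c" unfolding fl_simps[symmetric]
    by transfer (rule lie_cong.br_add_left)
  show "fl_br a (b + c) = fl_br a b + fl_br a c" unfolding fl_simps[symmetric]
    by transfer (rule lie_cong.br_add_right)
  show "fl_br (fl_smul l a) b = fl_smul l (fl_br a b)"
    by transfer (rule lie_cong.br_smul_left)
  show "fl_br a (fl_smul l b) = fl_smul l (fl_br a b)"
    by transfer (rule lie_cong.br_smul_right)
  show "fl_br a a = 0" unfolding fl_simps[symmetric]
    by transfer (rule lie_cong.br_alt)
  show "fl_br a (fl_br b c) + (fl_br b (fl_br c a) + fl_br c (fl_br a b)) = 0"
    unfolding fl_simps[symmetric]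
    by transfer (rule lie_cong.jacobi)
qed

lemma xi_ext:
  assumes "(a, b) \<in> ext_rels"
  shows "xi q a = xi q b"
proof -
  have "(\<exists>l h g. a = LSmul l (W h g) \<and> b = W (fl_smul l h) g)
      \<or> (\<exists>l h g. a = LSmul l (W h g) \<and> b = W h (fl_smul l g))
      \<or> (\<exists>h h' g. a = W (fl_add h h') g \<and> b = LAdd (W h g) (W h' g))
      \<or> (\<exists>h g g'. a = W h (fl_add g g') \<and> b = LAdd (W h g) (W h g'))
      \<or> (\<exists>h h' g. a = W (fl_br h h') g \<and> b = LAdd (W h (fl_br h' g)) (LNeg (W h' (fl_br h g))))
      \<or> (\<exists>h g g'. a = W h (fl_br g g') \<and> b = LAdd (W (fl_br g' h) g) (LNeg (W (fl_br g h) g')))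
      \<or> (\<exists>h g h' g'. a = LBr (W h g) (W h' g') \<and> b = W (fl_br h g) (fl_br h' g'))
      \<or> (\<exists>h. a = W h h \<and> b = LZero)"
    using assms unfolding ext_rels_def by simp
  then show ?thesis
  proof (elim disjE exE conjE)
    fix l h g assume "a = LSmul l (W h g)" "b = W (fl_smul l h) g"
    then show ?thesis by (simp add: fl.br_smul_left)
  next
    fix l h g assume "a = LSmul l (W h g)" "b = W h (fl_smul l g)"
    then show ?thesis by (simp add: fl.br_smul_right)
  next
    fix h h' g assume "a = W (fl_add h h') g" "b = LAdd (W h g) (W h' g)"
    then show ?thesis by (simp add: fl.br_add_left)
  next
    fix h g g' assume "a = W h (fl_add g g')" "b = LAdd (W h g) (W h g')"
    then show ?thesis by (simp add: fl.br_add_right)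
  next
    fix h h' g assume "a = W (fl_br h h') g" "b = LAdd (W h (fl_br h' g)) (LNeg (W h' (fl_br h g)))"
    then show ?thesis using fl.br_br_left[of h h' g] by simp
  next
    fix h g g' assume "a = W h (fl_br g g')" "b = LAdd (W (fl_br g' h) g) (LNeg (W (fl_br g h) g'))"
    then show ?thesis using fl.br_br_right[of h g g'] by simp
  next
    fix h g h' g' assume "a = LBr (W h g) (W h' g')" "b = W (fl_br h g) (fl_br h' g')"
    then show ?thesis by simp
  next
    fix h assume "a = W h h" "b = LZero"
    then show ?thesis by (simp add: fl.br_alt)
  qed
qed

lemma xi_curly:
  assumes "(a, b) \<in> curly_rels q"
  shows "xi q a = xi q b"
proof -
  have "(\<exists>h' h g. a = LBr (C h') (W h g) \<and>
         b = LAdd (W (fl_br (fl_smul (of_nat q) h') h) g) (W h (fl_br (fl_smul (of_nat q) h') g)))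
      \<or> (\<exists>l l' h h'. a = C (fl_add (fl_smul l h) (fl_smul l' h')) \<and> b = LAdd (LSmul l (C h)) (LSmul l' (C h')))
      \<or> (\<exists>h h'. a = LBr (C h) (C h') \<and> b = W (fl_smul (of_nat q) h) (fl_smul (of_nat q) h'))
      \<or> (\<exists>h g. a = C (fl_br h g) \<and> b = LSmul (of_nat q) (W h g))"
    using assms unfolding curly_rels_def by simp
  then show ?thesis
  proof (elim disjE exE conjE)
    fix h' h g assume "a = LBr (C h') (W h g)"
      "b = LAdd (W (fl_br (fl_smul (of_nat q) h') h) g) (W h (fl_br (fl_smul (of_nat q) h') g))"
    then show ?thesis using fl.br_derivation[of "fl_smul (of_nat q) h'" h g] by simp
  next
    fix l l' h h' assume "a = C (fl_add (fl_smul l h) (fl_smul l' h'))" "b = LAdd (LSmul l (C h)) (LSmul l' (C h'))"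
    then show ?thesis by (simp add: fl.smul_add fl.smul_comm[of "of_nat q"])
  next
    fix h h' assume "a = LBr (C h) (C h')" "b = W (fl_smul (of_nat q) h) (fl_smul (of_nat q) h')"
    then show ?thesis by simp
  next
    fix h g assume "a = C (fl_br h g)" "b = LSmul (of_nat q) (W h g)"
    then show ?thesis by simp
  qed
qed

lemma xi_rel:
  assumes "(a, b) \<in> qext_rels q"
  shows "xi q a = xi q b"
  using assms xi_ext xi_curly unfolding qext_rels_def
  by (cases "q = 0") auto

lemma xi_cong:
  "qext_eq q a b \<Longrightarrow> xi q a = xi q b"
proof (induction rule: lie_cong.induct)
  case (rel a b) then show ?case by (rule xi_rel)
next
  case (smul_add l a b) then show ?case by (simp add: fl.smul_add)
next
  case (add_smul l m a) then show ?case by (simp add: fl.add_smul)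
next
  case (smul_smul l m a) then show ?case by (simp add: fl.smul_smul)
next
  case (one_smul a) then show ?case by (simp add: fl.one_smul)
next
  case (br_add_left a b c) then show ?case by (simp add: fl.br_add_left)
next
  case (br_add_right a b c) then show ?case by (simp add: fl.br_add_right)
next
  case (br_smul_left l a b) then show ?case by (simp add: fl.br_smul_left)
next
  case (br_smul_right a l b) then show ?case by (simp add: fl.br_smul_right)
next
  case (br_alt a) then show ?case by (simp add: fl.br_alt)
next
  case (jacobi a b c) then show ?case by (simp add: fl.jacobi)
next
  case (add_assoc a b c) then show ?case by (simp add: add.assoc)
next
  case (add_comm a b) then show ?case by (simp add: add.commute)
qed simp_all


section \<open>The exterior square (relations (1)-(6), (11)) as a quotient\<close>

quotient_type (overloaded) ('x, 'r) wq = "(('x, 'r) qgen, 'r::comm_ring_1) lterm" / "lie_cong ext_rels"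
  by (rule lie_cong_equivp)

lift_definition wq_zero :: "('x, 'r::comm_ring_1) wq" is LZero .
lift_definition wq_add :: "('x, 'r::comm_ring_1) wq \<Rightarrow> ('x, 'r) wq \<Rightarrow> ('x, 'r) wq"
  is LAdd by (rule lie_cong.cong_add)
lift_definition wq_neg :: "('x, 'r::comm_ring_1) wq \<Rightarrow> ('x, 'r) wq"
  is LNeg by (rule lie_cong.cong_neg)
lift_definition wsm :: "'r::comm_ring_1 \<Rightarrow> ('x, 'r) wq \<Rightarrow> ('x, 'r) wq"
  is LSmul by (rule lie_cong.cong_smul)
lift_definition wbr :: "('x, 'r::comm_ring_1) wq \<Rightarrow> ('x, 'r) wq \<Rightarrow> ('x, 'r) wq"
  is LBr by (rule lie_cong.cong_br)

instantiation wq :: (type, comm_ring_1) ab_group_add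
begin
definition "plus_wq = wq_add"
definition "zero_wq = wq_zero"
definition "uminus_wq = wq_neg"
definition "minus_wq a b = wq_add a (wq_neg (b::('a,'b) wq))"
instance
proof
  fix a b c :: "('a,'b) wq"
  show "a + b + c = a + (b + c)" unfolding plus_wq_def
    by transfer (rule lie_cong.add_assoc)
  show "a + b = b + a" unfolding plus_wq_def
    by transfer (rule lie_cong.add_comm)
  show "0 + a = a" unfolding plus_wq_def zero_wq_def
    by transfer (meson lie_cong.add_comm lie_cong.add_zero lie_cong.trans)
  show "- a + a = 0" unfolding plus_wq_def zero_wq_def uminus_wq_def
    by transfer (meson lie_cong.add_comm lie_cong.add_neg lie_cong.trans)
  show "a - b = a + - b" unfolding plus_wq_def minus_wq_def uminus_wq_def ..
qed
end

lemma wq_simps[simp]: "wq_add a b = a + b" "wq_zero = 0" "wq_neg a = - a"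
  by (simp_all add: plus_wq_def zero_wq_def uminus_wq_def)

lemma abs_wq_simps[simp]:
  "abs_wq (LAdd a b) = abs_wq a + abs_wq b"
  "abs_wq LZero = 0"
  "abs_wq (LNeg a) = - abs_wq a"
  "abs_wq (LSmul l a) = wsm l (abs_wq a)"
  "abs_wq (LBr a b) = wbr (abs_wq a) (abs_wq b)"
  by (simp_all only: wq_simps[symmetric] wq_add.abs_eq wq_zero.abs_eq wq_neg.abs_eq
      wsm.abs_eq wbr.abs_eq)

interpretation wql: liealg wsm wbr
proof
  fix a b c l m
  show "wsm l (a + b) = wsm l a + wsm l b"
    by (induct a rule: wq.abs_induct, induct b rule: wq.abs_induct)
      (simp only: abs_wq_simps[symmetric] wq.abs_eq_iff lie_cong.intros)
  show "wsm (l + m) a = wsm l a + wsm m a"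
    by (induct a rule: wq.abs_induct)
      (simp only: abs_wq_simps[symmetric] wq.abs_eq_iff lie_cong.intros)
  show "wsm (l * m) a = wsm l (wsm m a)"
    by (induct a rule: wq.abs_induct)
      (simp only: abs_wq_simps[symmetric] wq.abs_eq_iff lie_cong.intros)
  show "wsm 1 a = a"
    by (induct a rule: wq.abs_induct)
      (simp only: abs_wq_simps[symmetric] wq.abs_eq_iff lie_cong.intros)
  show "wbr (a + b) c = wbr a c + wbr b c"
    by (induct a rule: wq.abs_induct, induct b rule: wq.abs_induct, induct c rule: wq.abs_induct)
      (simp only: abs_wq_simps[symmetric] wq.abs_eq_iff lie_cong.intros)
  show "wbr a (b + c) = wbr a b + wbr a c"
    by (induct a rule: wq.abs_induct, induct b rule: wq.abs_induct, induct c rule: wq.abs_induct)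
      (simp only: abs_wq_simps[symmetric] wq.abs_eq_iff lie_cong.intros)
  show "wbr (wsm l a) b = wsm l (wbr a b)"
    by (induct a rule: wq.abs_induct, induct b rule: wq.abs_induct)
      (simp only: abs_wq_simps[symmetric] wq.abs_eq_iff lie_cong.intros)
  show "wbr a (wsm l b) = wsm l (wbr a b)"
    by (induct a rule: wq.abs_induct, induct b rule: wq.abs_induct)
      (simp only: abs_wq_simps[symmetric] wq.abs_eq_iff lie_cong.intros)
  show "wbr a a = 0"
    by (induct a rule: wq.abs_induct)
      (simp only: abs_wq_simps[symmetric] wq.abs_eq_iff lie_cong.intros)
  show "wbr a (wbr b c) + (wbr b (wbr c a) + wbr c (wbr a b)) = 0"
    by (induct a rule: wq.abs_induct, induct b rule: wq.abs_induct, induct c rule: wq.abs_induct)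
      (simp only: abs_wq_simps[symmetric] wq.abs_eq_iff lie_cong.intros)
qed

lemma wrel: "(a, b) \<in> ext_rels \<Longrightarrow> abs_wq a = abs_wq b"
  by (simp add: wq.abs_eq_iff lie_cong.rel)

definition wW :: "('x, 'r::comm_ring_1) freelie \<Rightarrow> ('x, 'r) freelie \<Rightarrow> ('x, 'r) wq"
  where "wW h g = abs_wq (W h g)"

lemma wW_smul_left: "wW (fl_smul l h) g = wsm l (wW h g)"
  unfolding wW_def using wrel[of "LSmul l (W h g)" "W (fl_smul l h) g"]
  by (simp add: ext_rels_def)
lemma wW_smul_right: "wW h (fl_smul l g) = wsm l (wW h g)"
  unfolding wW_def using wrel[of "LSmul l (W h g)" "W h (fl_smul l g)"]
  by (simp add: ext_rels_def)
lemma wW_add_left: "wW (h + h') g = wW h g + wW h' g"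
  unfolding wW_def using wrel[of "W (fl_add h h') g" "LAdd (W h g) (W h' g)"]
  by (simp add: ext_rels_def)
lemma wW_add_right: "wW h (g + g') = wW h g + wW h g'"
  unfolding wW_def using wrel[of "W h (fl_add g g')" "LAdd (W h g) (W h g')"]
  by (simp add: ext_rels_def)
lemma wW_brl: "wW (fl_br h h') g = wW h (fl_br h' g) - wW h' (fl_br h g)"
  unfolding wW_def using wrel[of "W (fl_br h h') g" "LAdd (W h (fl_br h' g)) (LNeg (W h' (fl_br h g)))"]
  by (simp add: ext_rels_def)
lemma wbr_wW: "wbr (wW h g) (wW h' g') = wW (fl_br h g) (fl_br h' g')"
  unfolding wW_def using wrel[of "LBr (W h g) (W h' g')" "W (fl_br h g) (fl_br h' g')"]
  by (simp add: ext_rels_def)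
lemma wW_alt: "wW h h = 0"
  unfolding wW_def using wrel[of "W h h" LZero]
  by (simp add: ext_rels_def)

lemma wW_zero_left[simp]: "wW 0 g = 0"
proof -
  have "wW (0 + 0) g = wW 0 g + wW 0 g" by (rule wW_add_left)
  then show ?thesis by simp
qed
lemma wW_zero_right[simp]: "wW h 0 = 0"
proof -
  have "wW h (0 + 0) = wW h 0 + wW h 0" by (rule wW_add_right)
  then show ?thesis by simp
qed
lemma wW_neg_left: "wW (- h) g = - wW h g"
proof -
  have "wW (h + - h) g = wW h g + wW (- h) g" by (rule wW_add_left)
  then have "0 = wW h g + wW (- h) g" by simp
  then show ?thesis by (simp add: eq_neg_iff_add_eq_0 add.commute)
qed
lemma wW_neg_right: "wW h (- g) = - wW h g"
proof -
  have "wW h (g + - g) = wW h g + wW h (- g)" by (rule wW_add_right)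
  then have "0 = wW h g + wW h (- g)" by simp
  then show ?thesis by (simp add: eq_neg_iff_add_eq_0 add.commute)
qed
lemma wW_antisym: "wW g h = - wW h g"
proof -
  have "wW (h + g) (h + g) = wW h (h + g) + wW g (h + g)" by (rule wW_add_left)
  also have "\<dots> = (wW h h + wW h g) + (wW g h + wW g g)" by (simp only: wW_add_right)
  finally have "wW (h + g) (h + g) = (wW h h + wW h g) + (wW g h + wW g g)" .
  then have "0 = wW h g + wW g h" by (simp only: wW_alt add_0_left add_0_right)
  then show ?thesis by (simp add: eq_neg_iff_add_eq_0 add.commute)
qed

lemma wW_cocycle: "wW a (fl_br b c) + (wW b (fl_br c a) + wW c (fl_br a b)) = 0"
proof -
  have 1: "wW (fl_br b c) a = wW b (fl_br c a) - wW c (fl_br b a)" by (rule wW_brl)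
  have 2: "wW (fl_br b c) a = - wW a (fl_br b c)" by (rule wW_antisym)
  have 3: "wW c (fl_br b a) = - wW c (fl_br a b)"
  proof -
    have "fl_br b a = - fl_br a b" by (rule fl.br_antisym)
    then show ?thesis by (simp add: wW_neg_right)
  qed
  from 1 2 3 have "- wW a (fl_br b c) = wW b (fl_br c a) + wW c (fl_br a b)" by simp
  then have "wW a (fl_br b c) + (wW b (fl_br c a) + wW c (fl_br a b))
     = wW a (fl_br b c) + - wW a (fl_br b c)" by simp
  then show ?thesis by simp
qed

section \<open>The splitting map tau\<close>

primrec tau :: "('x, 'r::comm_ring_1) lterm \<Rightarrow> ('x, 'r) wq" where
  "tau (LGen x) = 0"
| "tau LZero = 0"
| "tau (LAdd a b) = tau a + tau b"
| "tau (LNeg a) = - tau a"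
| "tau (LSmul l a) = wsm l (tau a)"
| "tau (LBr a b) = wW (abs_freelie a) (abs_freelie b)"

lemma abs_fl_simps:
  "abs_freelie (LAdd a b) = abs_freelie a + abs_freelie b"
  "abs_freelie LZero = 0"
  "abs_freelie (LNeg a) = - abs_freelie a"
  "abs_freelie (LSmul l a) = fl_smul l (abs_freelie a)"
  "abs_freelie (LBr a b) = fl_br (abs_freelie a) (abs_freelie b)"
  by (simp_all only: fl_simps[symmetric] fl_add.abs_eq fl_zero.abs_eq fl_neg.abs_eq
      fl_smul.abs_eq fl_br.abs_eq)

lemma tau_resp: "lie_cong {} a b \<Longrightarrow> tau a = tau b"
proof (induction rule: lie_cong.induct)
  case (cong_br a a' b b')
  then have "abs_freelie a = abs_freelie a'" "abs_freelie b = abs_freelie b'"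
    by (simp_all add: freelie.abs_eq_iff)
  then show ?case by simp
next
  case (add_assoc a b c) then show ?case by (simp add: add.assoc)
next
  case (add_comm a b) then show ?case by (simp add: add.commute)
next
  case (smul_add l a b) then show ?case by (simp add: wql.smul_add)
next
  case (add_smul l m a) then show ?case by (simp add: wql.add_smul)
next
  case (smul_smul l m a) then show ?case by (simp add: wql.smul_smul)
next
  case (one_smul a) then show ?case by (simp add: wql.one_smul)
next
  case (br_add_left a b c) then show ?case by (simp add: abs_fl_simps wW_add_left)
next
  case (br_add_right a b c) then show ?case by (simp add: abs_fl_simps wW_add_right)
next
  case (br_smul_left l a b) then show ?case by (simp add: abs_fl_simps wW_smul_left)
next
  case (br_smul_right a l b) then show ?case by (simp add: abs_fl_simps wW_smul_right)
next
  case (br_alt a) then show ?case by (simp add: wW_alt)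
next
  case (jacobi a b c) then show ?case by (simp add: abs_fl_simps wW_cocycle)
qed simp_all

definition tauF :: "('x, 'r::comm_ring_1) freelie \<Rightarrow> ('x, 'r) wq"
  where "tauF x = tau (rep_freelie x)"

lemma tauF_abs: "tauF (abs_freelie a) = tau a"
  unfolding tauF_def
  by (rule tau_resp, rule Quotient3_rep_abs[OF Quotient3_freelie], rule lie_cong.refl)

lemma fl_rep: "x = abs_freelie (rep_freelie x)"
  by (simp add: Quotient3_abs_rep[OF Quotient3_freelie])

lemma tauF_simps:
  "tauF (x + y) = tauF x + tauF y"
  "tauF 0 = 0"
  "tauF (- x) = - tauF x"
  "tauF (fl_smul l x) = wsm l (tauF x)"
  "tauF (fl_br x y) = wW x y"
proof -
  show "tauF (x + y) = tauF x + tauF y"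
    by (subst (1 2) fl_rep[of x], subst (1 2) fl_rep[of y])
       (simp only: abs_fl_simps[symmetric] tauF_abs tau.simps)
  show "tauF 0 = 0"
    by (simp only: abs_fl_simps(2)[symmetric] tauF_abs tau.simps)
  show "tauF (- x) = - tauF x"
    by (subst (1 2) fl_rep[of x]) (simp only: abs_fl_simps[symmetric] tauF_abs tau.simps)
  show "tauF (fl_smul l x) = wsm l (tauF x)"
    by (subst (1 2) fl_rep[of x]) (simp only: abs_fl_simps[symmetric] tauF_abs tau.simps)
  show "tauF (fl_br x y) = wW x y"
    apply (subst (1) fl_rep[of x], subst (1) fl_rep[of y])
    apply (simp only: abs_fl_simps[symmetric] tauF_abs tau.simps)
    apply (simp only: fl_rep[symmetric])
    done
qed


definition wt :: "(('x, 'r) qgen, 'r) lterm \<Rightarrow> bool"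
  where "wt t \<longleftrightarrow> (\<forall>g \<in> lgens t. \<exists>h k. g = Wedge h k)"

lemma wt_simps[simp]:
  "wt (LGen g) \<longleftrightarrow> (\<exists>h k. g = Wedge h k)"
  "wt LZero"
  "wt (LAdd a b) \<longleftrightarrow> wt a \<and> wt b"
  "wt (LNeg a) \<longleftrightarrow> wt a"
  "wt (LSmul l a) \<longleftrightarrow> wt a"
  "wt (LBr a b) \<longleftrightarrow> wt a \<and> wt b"
  by (auto simp: wt_def)

lemma wt_iff: "a \<in> wedge_terms \<longleftrightarrow> wt a"
  by (simp add: wedge_terms_def wt_def)

lemma abs_W: "abs_wq (W h k) = wW h k"
  by (simp add: wW_def)

primrec tsz :: "('g, 'r) lterm \<Rightarrow> nat" where
  "tsz (LGen g) = 1"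
| "tsz LZero = 1"
| "tsz (LAdd a b) = tsz a + tsz b + 1"
| "tsz (LNeg a) = tsz a + 1"
| "tsz (LSmul l a) = tsz a + 1"
| "tsz (LBr a b) = tsz a + tsz b + 1"

lemma tsz_pos: "tsz a > 0"
  by (cases a) auto

lemma br_wedge:
  "wt s \<Longrightarrow> wt t \<Longrightarrow> wbr (abs_wq s) (abs_wq t) = wW (xi q s) (xi q t)"
proof (induction "tsz s + tsz t" arbitrary: s t rule: less_induct)
  case less
  show ?case
  proof (cases s)
    case (LGen g)
    then obtain h k where s: "s = W h k" using less.prems by auto
    show ?thesis
    proof (cases t)
      case (LGen g')
      then obtain h' k' where t: "t = W h' k'" using less.prems by auto
      show ?thesis by (simp add: s t abs_W wbr_wW)
    next
      case LZero
      then show ?thesis by (simp add: s)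
    next
      case (LAdd t1 t2)
      have "wbr (abs_wq s) (abs_wq t1) = wW (xi q s) (xi q t1)"
        using less LAdd by simp
      moreover have "wbr (abs_wq s) (abs_wq t2) = wW (xi q s) (xi q t2)"
        using less LAdd by simp
      ultimately show ?thesis using LAdd by (simp add: wql.br_add_right wW_add_right)
    next
      case (LNeg t1)
      have "wbr (abs_wq s) (abs_wq t1) = wW (xi q s) (xi q t1)"
        using less LNeg by simp
      then show ?thesis using LNeg by (simp add: wql.br_neg_right wW_neg_right)
    next
      case (LSmul l t1)
      have "wbr (abs_wq s) (abs_wq t1) = wW (xi q s) (xi q t1)"
        using less LSmul by simp
      then show ?thesis using LSmul by (simp add: wql.br_smul_right wW_smul_right)
    next
      case (LBr t1 t2)
      have "wbr (abs_wq t1) (abs_wq t2) = wW (xi q t1) (xi q t2)"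
        using less LBr by simp
      then show ?thesis using LBr by (simp add: s abs_W wbr_wW)
    qed
  next
    case LZero
    then show ?thesis by simp
  next
    case (LAdd s1 s2)
    have "wbr (abs_wq s1) (abs_wq t) = wW (xi q s1) (xi q t)"
      using less LAdd by simp
    moreover have "wbr (abs_wq s2) (abs_wq t) = wW (xi q s2) (xi q t)"
      using less LAdd by simp
    ultimately show ?thesis using LAdd by (simp add: wql.br_add_left wW_add_left)
  next
    case (LNeg s1)
    have "wbr (abs_wq s1) (abs_wq t) = wW (xi q s1) (xi q t)"
      using less LNeg by simp
    then show ?thesis using LNeg by (simp add: wql.br_neg_left wW_neg_left)
  next
    case (LSmul l s1)
    have "wbr (abs_wq s1) (abs_wq t) = wW (xi q s1) (xi q t)"
      using less LSmul by simp
    then show ?thesis using LSmul by (simp add: wql.br_smul_left wW_smul_left)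
  next
    case (LBr s1 s2)
    have 1: "wbr (abs_wq s1) (abs_wq s2) = wW (xi q s1) (xi q s2)"
      using less LBr by simp
    have "wbr (abs_wq (W (xi q s1) (xi q s2))) (abs_wq t)
        = wW (xi q (W (xi q s1) (xi q s2))) (xi q t)"
      by (rule less.hyps) (use less.prems LBr tsz_pos[of s1] in simp_all)
    then show ?thesis using LBr 1 by (simp add: abs_W)
  qed
qed

lemma abs_tauF: "wt a \<Longrightarrow> abs_wq a = tauF (xi q a)"
proof (induction a)
  case (LGen g)
  then obtain h k where "g = Wedge h k" by auto
  then show ?case by (simp add: abs_W tauF_simps)
next
  case (LBr a b)
  from LBr.prems have "wt a" "wt b" by simp_all
  then show ?case by (simp add: br_wedge tauF_simps)
qed (simp_all add: tauF_simps)

lemma lie_cong_mono: "lie_cong R a b \<Longrightarrow> R \<subseteq> R' \<Longrightarrow> lie_cong R' a b"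
  by (induction rule: lie_cong.induct) (auto intro: lie_cong.intros)

lemma ext_sub: "ext_rels \<subseteq> qext_rels q"
  by (simp add: qext_rels_def)

lemma part2:
  assumes "wt a" "wt b" "xi q a = xi q b"
  shows "qext_eq q a b"
proof -
  have "abs_wq a = abs_wq b" using assms abs_tauF[of a q] abs_tauF[of b q] by simp
  then have "lie_cong ext_rels a b" by (simp add: wq.abs_eq_iff)
  then show ?thesis using ext_sub lie_cong_mono by blast
qed

lemma der0: "0 \<in> fl_derived"
  using fl_derived.intros(1) by simp
lemma der_add: "a \<in> fl_derived \<Longrightarrow> b \<in> fl_derived \<Longrightarrow> a + b \<in> fl_derived"
  using fl_derived.intros(3) by simp
lemma der_neg: "a \<in> fl_derived \<Longrightarrow> - a \<in> fl_derived"
  using fl_derived.intros(4)[of a "-1"] by (simp add: fl.smul_neg1)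

lemma part3a: "wt a \<Longrightarrow> xi q a \<in> fl_derived"
proof (induction a)
  case (LGen g)
  then obtain h k where "g = Wedge h k" by auto
  then show ?case by (simp add: fl_derived.intros(2))
qed (auto simp: der0 der_add der_neg fl_derived.intros)

lemma part3b: "x \<in> fl_derived \<Longrightarrow> \<exists>a. wt a \<and> x = xi q a"
proof (induction rule: fl_derived.induct)
  case 1 then show ?case by (intro exI[of _ LZero]) simp
next
  case (2 x y) then show ?case by (intro exI[of _ "W x y"]) simp
next
  case (3 a b)
  then obtain u v where "wt u" "a = xi q u" "wt v" "b = xi q v" by blast
  then show ?case by (intro exI[of _ "LAdd u v"]) simp
next
  case (4 a l)
  then obtain u where "wt u" "a = xi q u" by blast
  then show ?case by (intro exI[of _ "LSmul l u"]) simp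
qed

theorem lemma6p3:
  fixes q :: nat
  assumes "q_torsion_free q TYPE('r::comm_ring_1)"
  shows "(\<forall>a b :: (('x, 'r) qgen, 'r) lterm. qext_eq q a b \<longrightarrow> xi q a = xi q b)
       \<and> (\<forall>a \<in> (wedge_terms :: (('x, 'r) qgen, 'r) lterm set). \<forall>b \<in> wedge_terms.
            xi q a = xi q b \<longrightarrow> qext_eq q a b)
       \<and> xi q ` (wedge_terms :: (('x, 'r) qgen, 'r) lterm set) = fl_derived"
proof (intro conjI allI impI ballI)
  fix a b :: "(('x, 'r) qgen, 'r) lterm"
  assume "qext_eq q a b" then show "xi q a = xi q b" by (rule xi_cong)
next
  fix a b :: "(('x, 'r) qgen, 'r) lterm"
  assume "a \<in> wedge_terms" "b \<in> wedge_terms" "xi q a = xi q b"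
  then show "qext_eq q a b" using part2 wt_iff by blast
next
  show "xi q ` (wedge_terms :: (('x, 'r) qgen, 'r) lterm set) = fl_derived"
  proof
    show "xi q ` (wedge_terms :: (('x, 'r) qgen, 'r) lterm set) \<subseteq> fl_derived"
      using part3a wt_iff by blast
    show "fl_derived \<subseteq> xi q ` (wedge_terms :: (('x, 'r) qgen, 'r) lterm set)"
    proof
      fix x :: "('x, 'r) freelie" assume "x \<in> fl_derived"
      then obtain a :: "(('x, 'r) qgen, 'r) lterm" where "wt a" "x = xi q a"
        using part3b by blast
      then show "x \<in> xi q ` wedge_terms" using wt_iff by blast
    qed
  qed
qed

end
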